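(* Let $\lambda$ be a partition with $|\lambda| = k$. Then for all $n \in \mathbb{N}$ (with $\mathbb{N}=\{0,1,2,\dots\}$), \[ \frac{1}{\# \mathcal{OT}(\lambda,k+2n)\cdot(2n+k+1)} \sum_{T \in \mathcal{OT}(\lambda,k+2n)} \mathrm{wt}(T) = \frac{n}{3} + \frac{k}{2}.\]
   Context: Young's lattice is the poset of all integer partitions ordered by inclusion of Young diagrams; write $\mu \lessdot \lambda$ if the Young diagram of $\lambda$ is obtained from that of $\mu$ by adding one box. $|\lambda|$ denotes the size (number of boxes) of $\lambda$. A walk in Young's lattice is a sequence of partitions $(\lambda^{0},\lambda^{1},\ldots,\lambda^{l})$ such that for each $1\le i\le l$ either $\lambda^{i-1}\lessdot\lambda^{i}$ or $\lambda^{i}\lessdot\lambda^{i-1}$. An oscillating tableau of shape $\lambda$ and length $l$ is such a walk with $\lambda^{0}=\emptyset$ (the empty partition) and $\lambda^{l}=\lambda$; $\mathcal{OT}(\lambda,l)$ denotes the set of all of them. The weight of $T=(\lambda^{0},\ldots,\lambda^{l})$ is $\mathrm{wt}(T) := \sum_{i=0}^{l}|\lambda^{i}|$. *)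

theory Defs
  imports Complex_Main
begin

definition is_partition :: "nat list \<Rightarrow> bool" where
  "is_partition la \<longleftrightarrow> sorted_wrt (\<ge>) la \<and> (\<forall>x\<in>set la. 0 < x)"

definition psize :: "nat list \<Rightarrow> nat" where
  "psize la = sum_list la"

definition diagram :: "nat list \<Rightarrow> (nat \<times> nat) set" where
  "diagram la = {(i, j). i < length la \<and> j < la ! i}"

definition covers :: "nat list \<Rightarrow> nat list \<Rightarrow> bool" where
  "covers mu la \<longleftrightarrow> is_partition mu \<and> is_partition la \<and>
     (\<exists>c. c \<notin> diagram mu \<and> diagram la = insert c (diagram mu))"

definition OT :: "nat list \<Rightarrow> nat \<Rightarrow> nat list list set" where
  "OT la l = {T. length T = l + 1 \<and> T ! 0 = [] \<and> T ! l = la \<and>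
     (\<forall>i. 1 \<le> i \<and> i \<le> l \<longrightarrow> covers (T ! (i - 1)) (T ! i) \<or> covers (T ! i) (T ! (i - 1)))}"

definition wt :: "nat list list \<Rightarrow> nat" where
  "wt T = (\<Sum>i<length T. psize (T ! i))"

end

theory Submission
  imports Defs
begin


definition yideal :: "(nat \<times> nat) set \<Rightarrow> bool" where
  "yideal D \<longleftrightarrow> finite D \<and> (\<forall>i j i' j'. (i,j) \<in> D \<longrightarrow> i' \<le> i \<longrightarrow> j' \<le> j \<longrightarrow> (i',j') \<in> D)"

definition rowlen :: "(nat \<times> nat) set \<Rightarrow> nat \<Rightarrow> nat" where
  "rowlen D i = card {j. (i,j) \<in> D}"

definition part_of :: "(nat \<times> nat) set \<Rightarrow> nat list" where
  "part_of D = map (rowlen D) [0..<card {i. (i,0) \<in> D}]"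

lemma downset_nat:
  assumes "finite S" "\<And>x y. x \<in> S \<Longrightarrow> y \<le> x \<Longrightarrow> y \<in> S"
  shows "S = {..<card S}"
proof -
  have "x < card S" if "x \<in> S" for x
  proof -
    have "{..x} \<subseteq> S" using assms(2) that by auto
    then have "card {..x} \<le> card S" using assms(1) by (rule card_mono[rotated])
    then show ?thesis by simp
  qed
  then have "S \<subseteq> {..<card S}" by auto
  then show ?thesis using card_subset_eq[of "{..<card S}" S] by simp
qed

lemma diagram_Sigma: "diagram la = Sigma {..<length la} (\<lambda>i. {..<la ! i})"
  unfolding diagram_def by auto

lemma psize_card: "psize la = card (diagram la)"
  unfolding psize_def diagram_Sigma
  by (simp add: card_SigmaI sum_list_sum_nth atLeast0LessThan)

lemma finite_diagram: "finite (diagram la)"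
  unfolding diagram_Sigma by auto

lemma partition_nth_mono:
  assumes "is_partition la" "i' \<le> i" "i < length la"
  shows "la ! i \<le> la ! i'"
proof (cases "i' = i")
  case False
  then have "i' < i" using assms by simp
  then show ?thesis using assms sorted_wrt_nth_less[of "(\<ge>)" la i' i] unfolding is_partition_def by simp
qed simp

lemma partition_pos:
  assumes "is_partition la" "i < length la"
  shows "0 < la ! i"
  using assms unfolding is_partition_def by auto

lemma yideal_diagram: "is_partition la \<Longrightarrow> yideal (diagram la)"
  unfolding yideal_def
proof (intro conjI allI impI)
  assume p: "is_partition la"
  show "finite (diagram la)" by (rule finite_diagram)
  fix i j i' j' assume "(i, j) \<in> diagram la" "i' \<le> i" "j' \<le> j"
  then have h: "i < length la" "j < la ! i" "i' \<le> i" "j' \<le> j" unfolding diagram_def by auto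
  then have "la ! i \<le> la ! i'" using partition_nth_mono[OF p] by blast
  then show "(i', j') \<in> diagram la" using h unfolding diagram_def by auto
qed

lemma yideal_row:
  assumes "yideal D"
  shows "{j. (i,j) \<in> D} = {..<rowlen D i}"
  unfolding rowlen_def
proof (rule downset_nat)
  show "finite {j. (i, j) \<in> D}"
  proof (rule finite_subset)
    show "{j. (i, j) \<in> D} \<subseteq> snd ` D" by (auto intro: rev_image_eqI)
    show "finite (snd ` D)" using assms unfolding yideal_def by blast
  qed
  show "\<And>x y. x \<in> {j. (i, j) \<in> D} \<Longrightarrow> y \<le> x \<Longrightarrow> y \<in> {j. (i, j) \<in> D}"
    using assms unfolding yideal_def by auto
qed

lemma yideal_col:
  assumes "yideal D"
  shows "{i. (i,0) \<in> D} = {..<card {i. (i,0) \<in> D}}"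
proof (rule downset_nat)
  show "finite {i. (i, 0) \<in> D}"
  proof (rule finite_subset)
    show "{i. (i, 0) \<in> D} \<subseteq> fst ` D" by (auto intro: rev_image_eqI)
    show "finite (fst ` D)" using assms unfolding yideal_def by blast
  qed
  show "\<And>x y. x \<in> {i. (i, 0) \<in> D} \<Longrightarrow> y \<le> x \<Longrightarrow> y \<in> {i. (i, 0) \<in> D}"
    using assms unfolding yideal_def by auto
qed

lemma yideal_mem:
  assumes "yideal D"
  shows "(i,j) \<in> D \<longleftrightarrow> i < card {i. (i,0) \<in> D} \<and> j < rowlen D i"
proof -
  have r: "(i,j) \<in> D \<longleftrightarrow> j < rowlen D i" using yideal_row[OF assms, of i] by blast
  have c: "(i,0) \<in> D \<longleftrightarrow> i < card {i. (i,0) \<in> D}" using yideal_col[OF assms] by blast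
  have "(i,j) \<in> D \<Longrightarrow> (i,0) \<in> D" using assms unfolding yideal_def by blast
  then show ?thesis using r c by blast
qed

lemma part_of_props:
  assumes "yideal D"
  shows "is_partition (part_of D)" "diagram (part_of D) = D"
proof -
  let ?h = "card {i. (i,0) \<in> D}"
  have mono: "rowlen D i' \<ge> rowlen D i" if "i' \<le> i" for i i'
  proof -
    have "{j. (i,j) \<in> D} \<subseteq> {j. (i',j) \<in> D}" using assms that unfolding yideal_def by auto
    then show ?thesis using yideal_row[OF assms, of i] yideal_row[OF assms, of i'] by auto
  qed
  have pos: "rowlen D i > 0" if "i < ?h" for i
    using yideal_col[OF assms] yideal_row[OF assms, of i] that by auto
  show "is_partition (part_of D)"
    unfolding is_partition_def part_of_def
    using mono pos by (auto simp: sorted_wrt_iff_nth_less)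
  show "diagram (part_of D) = D"
  proof (rule set_eqI)
    fix x :: "nat \<times> nat"
    obtain i j where x: "x = (i,j)" by fastforce
    have "x \<in> diagram (part_of D) \<longleftrightarrow> i < ?h \<and> j < rowlen D i"
      unfolding x diagram_def part_of_def by auto
    then show "x \<in> diagram (part_of D) \<longleftrightarrow> x \<in> D" using yideal_mem[OF assms, of i j] x by simp
  qed
qed

lemma part_of_diagram:
  assumes "is_partition la"
  shows "part_of (diagram la) = la"
proof -
  have col: "{i. (i,0) \<in> diagram la} = {..<length la}"
    using partition_pos[OF assms] unfolding diagram_def by auto
  have row: "rowlen (diagram la) i = la ! i" if "i < length la" for i
    unfolding rowlen_def diagram_def using that by simp
  show ?thesis by (rule nth_equalityI) (simp_all add: part_of_def col row)
qed

lemma diagram_inj: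
  "is_partition la \<Longrightarrow> is_partition mu \<Longrightarrow> diagram la = diagram mu \<Longrightarrow> la = mu"
proof -
  assume "is_partition la" "is_partition mu" "diagram la = diagram mu"
  then show "la = mu" using part_of_diagram by metis
qed



definition UpS :: "nat list \<Rightarrow> nat list set" where "UpS mu = {nu. covers mu nu}"
definition DnS :: "nat list \<Rightarrow> nat list set" where "DnS mu = {nu. covers nu mu}"
definition addable :: "(nat \<times> nat) set \<Rightarrow> (nat \<times> nat) set" where
  "addable D = {c. c \<notin> D \<and> yideal (insert c D)}"
definition removable :: "(nat \<times> nat) set \<Rightarrow> (nat \<times> nat) set" where
  "removable D = {c. c \<in> D \<and> yideal (D - {c})}"

lemma up_image:
  assumes p: "is_partition mu"
  shows "UpS mu = (\<lambda>c. part_of (insert c (diagram mu))) ` addable (diagram mu)"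
    and "inj_on (\<lambda>c. part_of (insert c (diagram mu))) (addable (diagram mu))"
proof -
  show "UpS mu = (\<lambda>c. part_of (insert c (diagram mu))) ` addable (diagram mu)"
  proof (rule set_eqI, rule iffI)
    fix nu assume "nu \<in> UpS mu"
    then obtain c where c: "is_partition nu" "c \<notin> diagram mu" "diagram nu = insert c (diagram mu)"
      unfolding UpS_def covers_def by auto
    then have "c \<in> addable (diagram mu)" unfolding addable_def using yideal_diagram[of nu] by simp
    moreover have "nu = part_of (insert c (diagram mu))" using c part_of_diagram[of nu] by simp
    ultimately show "nu \<in> (\<lambda>c. part_of (insert c (diagram mu))) ` addable (diagram mu)" by blast
  next
    fix nu assume "nu \<in> (\<lambda>c. part_of (insert c (diagram mu))) ` addable (diagram mu)"
    then obtain c where c: "c \<notin> diagram mu" "yideal (insert c (diagram mu))"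
       "nu = part_of (insert c (diagram mu))" unfolding addable_def by auto
    then show "nu \<in> UpS mu" unfolding UpS_def covers_def mem_Collect_eq using p part_of_props[OF c(2)] c by blast
  qed
  show "inj_on (\<lambda>c. part_of (insert c (diagram mu))) (addable (diagram mu))"
  proof (rule inj_onI)
    fix c d assume a: "c \<in> addable (diagram mu)" "d \<in> addable (diagram mu)"
      "part_of (insert c (diagram mu)) = part_of (insert d (diagram mu))"
    have y: "yideal (insert c (diagram mu))" "yideal (insert d (diagram mu))"
      using a(1,2) unfolding addable_def by auto
    have "insert c (diagram mu) = diagram (part_of (insert c (diagram mu)))"
      using part_of_props(2)[OF y(1)] by simp
    also have "\<dots> = diagram (part_of (insert d (diagram mu)))" using a(3) by simp
    also have "\<dots> = insert d (diagram mu)" using part_of_props(2)[OF y(2)] by simp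
    finally have "insert c (diagram mu) = insert d (diagram mu)" .
    then show "c = d" using a(1,2) unfolding addable_def by blast
  qed
qed

lemma dn_image:
  assumes p: "is_partition mu"
  shows "DnS mu = (\<lambda>c. part_of (diagram mu - {c})) ` removable (diagram mu)"
    and "inj_on (\<lambda>c. part_of (diagram mu - {c})) (removable (diagram mu))"
proof -
  show "DnS mu = (\<lambda>c. part_of (diagram mu - {c})) ` removable (diagram mu)"
  proof (rule set_eqI, rule iffI)
    fix nu assume "nu \<in> DnS mu"
    then obtain c where c: "is_partition nu" "c \<notin> diagram nu" "diagram mu = insert c (diagram nu)"
      unfolding DnS_def covers_def by auto
    have e: "diagram mu - {c} = diagram nu" using c(2) unfolding c(3) by (rule Diff_insert_absorb)
    have cm: "c \<in> diagram mu" using c(3) by simp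
    have "c \<in> removable (diagram mu)" unfolding removable_def using yideal_diagram[OF c(1)] e cm by simp
    moreover have "nu = part_of (diagram mu - {c})" using e part_of_diagram[OF c(1)] by simp
    ultimately show "nu \<in> (\<lambda>c. part_of (diagram mu - {c})) ` removable (diagram mu)" by blast
  next
    fix nu assume "nu \<in> (\<lambda>c. part_of (diagram mu - {c})) ` removable (diagram mu)"
    then obtain c where c: "c \<in> diagram mu" "yideal (diagram mu - {c})"
       "nu = part_of (diagram mu - {c})" unfolding removable_def by auto
    then have "diagram mu = insert c (diagram nu)" "c \<notin> diagram nu"
      using part_of_props(2)[OF c(2)] c(1) by auto
    then show "nu \<in> DnS mu" unfolding DnS_def covers_def mem_Collect_eq using p part_of_props(1)[OF c(2)] c by blast
  qed
  show "inj_on (\<lambda>c. part_of (diagram mu - {c})) (removable (diagram mu))"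
  proof (rule inj_onI)
    fix c d assume a: "c \<in> removable (diagram mu)" "d \<in> removable (diagram mu)"
      "part_of (diagram mu - {c}) = part_of (diagram mu - {d})"
    have y: "yideal (diagram mu - {c})" "yideal (diagram mu - {d})"
      using a(1,2) unfolding removable_def by auto
    have "diagram mu - {c} = diagram (part_of (diagram mu - {c}))"
      using part_of_props(2)[OF y(1)] by simp
    also have "\<dots> = diagram (part_of (diagram mu - {d}))" using a(3) by simp
    also have "\<dots> = diagram mu - {d}" using part_of_props(2)[OF y(2)] by simp
    finally have "diagram mu - {c} = diagram mu - {d}" .
    then show "c = d" using a(1,2) unfolding removable_def by blast
  qed
qed

definition Aset :: "nat list \<Rightarrow> nat set" where
  "Aset la = {i. i < length la \<and> (i = 0 \<or> la ! i < la ! (i - 1))} \<union> {length la}"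
definition Rset :: "nat list \<Rightarrow> nat set" where
  "Rset la = {i. i < length la \<and> (Suc i = length la \<or> la ! Suc i < la ! i)}"

lemma Aset_eq: "Aset la = insert 0 (Suc ` Rset la)"
proof (rule set_eqI, rule iffI)
  fix x assume x: "x \<in> Aset la"
  show "x \<in> insert 0 (Suc ` Rset la)"
  proof (cases x)
    case (Suc i)
    then have "i \<in> Rset la" using x unfolding Aset_def Rset_def by auto
    then show ?thesis using Suc by blast
  qed simp
next
  fix x assume x: "x \<in> insert 0 (Suc ` Rset la)"
  show "x \<in> Aset la"
  proof (cases "x = 0")
    case True then show ?thesis unfolding Aset_def by (cases "length la") auto
  next
    case False
    then obtain i where "x = Suc i" "i \<in> Rset la" using x by auto
    then show ?thesis unfolding Aset_def Rset_def by auto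
  qed
qed

lemma card_Aset: "card (Aset la) = Suc (card (Rset la))"
proof -
  have f: "finite (Rset la)" unfolding Rset_def by auto
  have "card (insert 0 (Suc ` Rset la)) = Suc (card (Suc ` Rset la))" using f by simp
  also have "card (Suc ` Rset la) = card (Rset la)" by (simp add: card_image)
  finally show ?thesis by (simp add: Aset_eq)
qed

lemma finite_Aset: "finite (Aset la)" unfolding Aset_def by auto
lemma finite_Rset: "finite (Rset la)" unfolding Rset_def by auto

lemma addable_eq:
  assumes p: "is_partition la"
  shows "addable (diagram la) = (\<lambda>i. (i, if i < length la then la ! i else 0)) ` Aset la"
proof (rule set_eqI, rule iffI)
  fix c assume c: "c \<in> addable (diagram la)"
  obtain i j where cij: "c = (i,j)" by fastforce
  have nd: "(i,j) \<notin> diagram la" and yi: "yideal (insert (i,j) (diagram la))"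
    using c cij unfolding addable_def by auto
  have dn: "(i',j') \<in> diagram la" if "i' \<le> i" "j' \<le> j" "(i',j') \<noteq> (i,j)" for i' j'
    using yi that unfolding yideal_def by blast
  show "c \<in> (\<lambda>i. (i, if i < length la then la ! i else 0)) ` Aset la"
  proof (cases "j = 0")
    case False
    then have "(i, j - 1) \<in> diagram la" using dn[of i "j-1"] by auto
    then have h: "i < length la" "j - 1 < la ! i" unfolding diagram_def by auto
    then have jj: "j = la ! i" using nd False unfolding diagram_def by auto
    have "i \<in> Aset la"
    proof (cases "i = 0")
      case False
      then have "(i - 1, j) \<in> diagram la" using dn[of "i-1" j] by auto
      then have "j < la ! (i - 1)" unfolding diagram_def by auto
      then show ?thesis using h jj False unfolding Aset_def by auto
    qed (use h in \<open>auto simp: Aset_def\<close>)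
    then show ?thesis using cij h jj by (auto intro!: rev_image_eqI)
  next
    case True
    have "\<not> i < length la"
    proof
      assume "i < length la"
      then have "(i,j) \<in> diagram la" using True partition_pos[OF p] unfolding diagram_def by auto
      then show False using nd by simp
    qed
    moreover have "\<not> i > length la"
    proof
      assume "i > length la"
      then have "(i - 1, 0) \<noteq> (i, j)" by auto
      then have "(i - 1, 0) \<in> diagram la" using dn[of "i-1" 0] by auto
      then show False using \<open>i > length la\<close> unfolding diagram_def by auto
    qed
    ultimately have "i = length la" by simp
    then show ?thesis using cij True unfolding Aset_def by (auto intro!: rev_image_eqI)
  qed
next
  fix c assume "c \<in> (\<lambda>i. (i, if i < length la then la ! i else 0)) ` Aset la"
  then obtain i where i: "i \<in> Aset la" "c = (i, if i < length la then la ! i else 0)" by auto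
  show "c \<in> addable (diagram la)"
    unfolding addable_def
  proof (intro CollectI conjI)
    show "c \<notin> diagram la" using i unfolding diagram_def by auto
    show "yideal (insert c (diagram la))"
      unfolding yideal_def
    proof (intro conjI allI impI)
      show "finite (insert c (diagram la))" using finite_diagram by simp
      fix i1 j1 i' j' assume a: "(i1, j1) \<in> insert c (diagram la)" "i' \<le> i1" "j' \<le> j1"
      show "(i', j') \<in> insert c (diagram la)"
      proof (cases "(i1,j1) \<in> diagram la")
        case True
        then show ?thesis using yideal_diagram[OF p] a unfolding yideal_def by blast
      next
        case False
        then have c1: "(i1,j1) = c" using a by auto
        show ?thesis
        proof (cases "(i',j') = c")
          case False
          show ?thesis
          proof (cases "i < length la")
            case True
            then have ij: "i1 = i" "j1 = la ! i" using c1 i by auto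
            show ?thesis
            proof (cases "i' < i")
              case True
              then have "i \<noteq> 0" by simp
              then have "la ! i < la ! (i - 1)" using i \<open>i < length la\<close> unfolding Aset_def by auto
              moreover have "la ! (i - 1) \<le> la ! i'" using partition_nth_mono[OF p, of i' "i - 1"] True \<open>i < length la\<close> by simp
              ultimately show ?thesis using a ij True \<open>i < length la\<close> unfolding diagram_def by auto
            next
              case False
              then have "i' = i" "j' < j1" using a ij \<open>(i',j') \<noteq> c\<close> i \<open>i < length la\<close> by auto
              then show ?thesis using ij \<open>i < length la\<close> unfolding diagram_def by auto
            qed
          next
            case False
            then have ij: "i1 = i" "j1 = 0" "i = length la" using c1 i unfolding Aset_def by auto
            then have "j' = 0" "i' < length la" using a \<open>(i',j') \<noteq> c\<close> i by auto
            then show ?thesis using partition_pos[OF p] unfolding diagram_def by auto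
          qed
        qed simp
      qed
    qed
  qed
qed

lemma removable_eq:
  assumes p: "is_partition la"
  shows "removable (diagram la) = (\<lambda>i. (i, la ! i - 1)) ` Rset la"
proof (rule set_eqI, rule iffI)
  fix c assume c: "c \<in> removable (diagram la)"
  obtain i j where cij: "c = (i,j)" by fastforce
  have d: "(i,j) \<in> diagram la" and yi: "yideal (diagram la - {(i,j)})"
    using c cij unfolding removable_def by auto
  have h: "i < length la" "j < la ! i" using d unfolding diagram_def by auto
  have up: "(i1,j1) \<notin> diagram la" if "i \<le> i1" "j \<le> j1" "(i1,j1) \<noteq> (i,j)" for i1 j1
    using yi that unfolding yideal_def by blast
  have jj: "j = la ! i - 1"
  proof (rule ccontr)
    assume "j \<noteq> la ! i - 1"
    then have "Suc j < la ! i" using h by simp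
    then show False using up[of i "Suc j"] h unfolding diagram_def by auto
  qed
  have "i \<in> Rset la"
  proof (rule ccontr)
    assume "i \<notin> Rset la"
    then have "Suc i < length la" "la ! i \<le> la ! Suc i" using h unfolding Rset_def by auto
    then show False using up[of "Suc i" j] h unfolding diagram_def by auto
  qed
  then show "c \<in> (\<lambda>i. (i, la ! i - 1)) ` Rset la" using cij jj by auto
next
  fix c assume "c \<in> (\<lambda>i. (i, la ! i - 1)) ` Rset la"
  then obtain i where i: "i \<in> Rset la" "c = (i, la ! i - 1)" by auto
  have il: "i < length la" using i unfolding Rset_def by auto
  have pos: "0 < la ! i" using partition_pos[OF p il] .
  show "c \<in> removable (diagram la)"
    unfolding removable_def
  proof (intro CollectI conjI)
    show "c \<in> diagram la" using i il pos unfolding diagram_def by auto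
    show "yideal (diagram la - {c})"
      unfolding yideal_def
    proof (intro conjI allI impI)
      show "finite (diagram la - {c})" using finite_diagram by simp
      fix i1 j1 i' j' assume a: "(i1, j1) \<in> diagram la - {c}" "i' \<le> i1" "j' \<le> j1"
      have "(i', j') \<in> diagram la" using a yideal_diagram[OF p] unfolding yideal_def by blast
      moreover have "(i', j') \<noteq> c"
      proof
        assume e: "(i', j') = c"
        have a1: "i1 < length la" "j1 < la ! i1" "(i1,j1) \<noteq> c" using a unfolding diagram_def by auto
        have "i \<le> i1" "la ! i - 1 \<le> j1" using e a i by auto
        then have "la ! i1 \<le> la ! i" using partition_nth_mono[OF p] a1 by blast
        then have j1: "j1 = la ! i - 1" using a1 \<open>la ! i - 1 \<le> j1\<close> by simp
        then have "i1 \<noteq> i" using a1 i by auto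
        then have "Suc i \<le> i1" using \<open>i \<le> i1\<close> by simp
        then have "Suc i < length la" using a1 by simp
        then have "la ! Suc i < la ! i" using i unfolding Rset_def by auto
        moreover have "la ! i1 \<le> la ! Suc i" using partition_nth_mono[OF p \<open>Suc i \<le> i1\<close> a1(1)] .
        ultimately show False using a1 j1 by simp
      qed
      ultimately show "(i', j') \<in> diagram la - {c}" by simp
    qed
  qed
qed

lemma UpDn_card:
  assumes p: "is_partition mu"
  shows "finite (UpS mu)" "finite (DnS mu)" "card (UpS mu) = Suc (card (DnS mu))"
proof -
  have ia: "inj_on (\<lambda>i. (i, if i < length mu then mu ! i else 0)) (Aset mu)"
    by (auto intro: inj_onI)
  have ir: "inj_on (\<lambda>i. (i, mu ! i - 1)) (Rset mu)"
    by (auto intro: inj_onI)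
  have ca: "card (addable (diagram mu)) = card (Aset mu)"
    using addable_eq[OF p] ia by (simp add: card_image)
  have cr: "card (removable (diagram mu)) = card (Rset mu)"
    using removable_eq[OF p] ir by (simp add: card_image)
  have fa: "finite (addable (diagram mu))" using addable_eq[OF p] finite_Aset by simp
  have fr: "finite (removable (diagram mu))" using removable_eq[OF p] finite_Rset by simp
  show "finite (UpS mu)" using up_image(1)[OF p] fa by simp
  show "finite (DnS mu)" using dn_image(1)[OF p] fr by simp
  have "card (UpS mu) = card (addable (diagram mu))"
    using up_image[OF p] by (simp add: card_image)
  moreover have "card (DnS mu) = card (removable (diagram mu))"
    using dn_image[OF p] by (simp add: card_image)
  ultimately show "card (UpS mu) = Suc (card (DnS mu))" using ca cr card_Aset by simp
qed



definition NB :: "nat list \<Rightarrow> nat list set" where "NB la = UpS la \<union> DnS la"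

lemma covers_part: "covers mu la \<Longrightarrow> is_partition mu \<and> is_partition la"
  unfolding covers_def by simp

lemma covers_psize: "covers mu la \<Longrightarrow> psize la = Suc (psize mu)"
  unfolding covers_def psize_card using finite_diagram by auto

lemma NB_finite: "finite (NB la)"
proof (cases "is_partition la")
  case True then show ?thesis using UpDn_card[OF True] unfolding NB_def by simp
next
  case False
  then have "NB la = {}" unfolding NB_def UpS_def DnS_def using covers_part by blast
  then show ?thesis by simp
qed

lemma NB_disj: "UpS la \<inter> DnS la = {}"
  unfolding UpS_def DnS_def by (auto dest!: covers_psize)

lemma OT_0: "OT la 0 = (if la = [] then {[[]]} else {})"
proof -
  have "T \<in> OT la 0 \<longleftrightarrow> la = [] \<and> T = [[]]" for T
  proof
    assume "T \<in> OT la 0"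
    then have "length T = 1" "T ! 0 = []" "T ! 0 = la" unfolding OT_def by auto
    then show "la = [] \<and> T = [[]]" by (cases T) auto
  qed (auto simp: OT_def)
  then show ?thesis by auto
qed

lemma OT_Suc: "OT la (Suc l) = (\<lambda>T. T @ [la]) ` (\<Union>nu \<in> NB la. OT nu l)"
proof (rule set_eqI, rule iffI)
  fix T assume T: "T \<in> OT la (Suc l)"
  then have len: "length T = Suc (Suc l)" and t0: "T ! 0 = []" and tl: "T ! Suc l = la"
    and st: "\<And>i. 1 \<le> i \<Longrightarrow> i \<le> Suc l \<Longrightarrow> covers (T ! (i - 1)) (T ! i) \<or> covers (T ! i) (T ! (i - 1))"
    unfolding OT_def by auto
  define T0 where "T0 = butlast T"
  have ne: "T \<noteq> []" using len by auto
  have lastT: "last T = la" using len tl ne by (simp add: last_conv_nth)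
  have TT: "T = T0 @ [la]" unfolding T0_def using ne lastT append_butlast_last_id by metis
  have len0: "length T0 = Suc l" unfolding T0_def using len by simp
  have nth0: "T0 ! i = T ! i" if "i \<le> l" for i unfolding T0_def using that len by (simp add: nth_butlast)
  have "T0 \<in> OT (T ! l) l"
    unfolding OT_def
  proof (intro CollectI conjI allI impI)
    show "length T0 = l + 1" using len0 by simp
    show "T0 ! 0 = []" using nth0[of 0] t0 by simp
    show "T0 ! l = T ! l" using nth0 by simp
    fix i assume i: "1 \<le> i \<and> i \<le> l"
    then have "i \<le> l" "i - 1 \<le> l" by auto
    then have "T0 ! i = T ! i" "T0 ! (i - 1) = T ! (i - 1)" using nth0 by auto
    then show "covers (T0 ! (i - 1)) (T0 ! i) \<or> covers (T0 ! i) (T0 ! (i - 1))"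
      using st[of i] i by simp
  qed
  moreover have "T ! l \<in> NB la" using st[of "Suc l"] tl unfolding NB_def UpS_def DnS_def by auto
  ultimately show "T \<in> (\<lambda>T. T @ [la]) ` (\<Union>nu \<in> NB la. OT nu l)" using TT by blast
next
  fix T assume "T \<in> (\<lambda>T. T @ [la]) ` (\<Union>nu \<in> NB la. OT nu l)"
  then obtain T0 nu where T: "T = T0 @ [la]" "nu \<in> NB la" "T0 \<in> OT nu l" by auto
  then have len0: "length T0 = Suc l" and t0: "T0 ! 0 = []" and tl: "T0 ! l = nu"
    and st: "\<And>i. 1 \<le> i \<Longrightarrow> i \<le> l \<Longrightarrow> covers (T0 ! (i - 1)) (T0 ! i) \<or> covers (T0 ! i) (T0 ! (i - 1))"
    unfolding OT_def by auto
  have nth0: "T ! i = T0 ! i" if "i \<le> l" for i using T(1) len0 that by (simp add: nth_append)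
  have nthl: "T ! Suc l = la" using T(1) len0 by (simp add: nth_append)
  show "T \<in> OT la (Suc l)"
    unfolding OT_def
  proof (intro CollectI conjI allI impI)
    show "length T = Suc l + 1" using T(1) len0 by simp
    show "T ! 0 = []" using nth0[of 0] t0 by simp
    show "T ! Suc l = la" by (rule nthl)
    fix i assume i: "1 \<le> i \<and> i \<le> Suc l"
    show "covers (T ! (i - 1)) (T ! i) \<or> covers (T ! i) (T ! (i - 1))"
    proof (cases "i = Suc l")
      case True
      then show ?thesis using nthl nth0[of l] tl T(2) unfolding NB_def UpS_def DnS_def by auto
    next
      case False
      then have "i \<le> l" "i - 1 \<le> l" using i by auto
      then have "T ! i = T0 ! i" "T ! (i - 1) = T0 ! (i - 1)" using nth0 by auto
      then show ?thesis using i \<open>i \<le> l\<close> st[of i] by simp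
    qed
  qed
qed

lemma OT_finite: "finite (OT la l)"
proof (induction l arbitrary: la)
  case 0 then show ?case by (simp add: OT_0)
next
  case (Suc l) then show ?case by (simp add: OT_Suc NB_finite)
qed

lemma OT_last: "T \<in> OT la l \<Longrightarrow> T ! l = la" unfolding OT_def by auto

lemma OT_size: "T \<in> OT la l \<Longrightarrow> psize la \<le> l \<and> even (l + psize la)"
proof (induction l arbitrary: la T)
  case 0 then show ?case by (simp add: OT_0 split: if_splits) (simp add: psize_def)
next
  case (Suc l)
  then obtain nu T0 where nu: "nu \<in> NB la" "T0 \<in> OT nu l" unfolding OT_Suc by auto
  then have ih: "psize nu \<le> l \<and> even (l + psize nu)" using Suc.IH by blast
  from nu(1) have "psize la = Suc (psize nu) \<or> psize nu = Suc (psize la)"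
    unfolding NB_def UpS_def DnS_def using covers_psize by auto
  then show ?case using ih by auto
qed

lemma OT_empty: "l < psize la \<Longrightarrow> OT la l = {}"
  using OT_size by fastforce

lemma OT_partition: "T \<in> OT la l \<Longrightarrow> la = [] \<or> is_partition la"
proof (cases l)
  case 0 then show "T \<in> OT la l \<Longrightarrow> ?thesis" by (simp add: OT_0 split: if_splits)
next
  case (Suc l')
  show "T \<in> OT la l \<Longrightarrow> ?thesis"
  proof -
    assume "T \<in> OT la l"
    then obtain nu where "nu \<in> NB la" unfolding Suc OT_Suc by auto
    then show ?thesis unfolding NB_def UpS_def DnS_def using covers_part by auto
  qed
qed

lemma wt_snoc: "wt (T @ [x]) = wt T + psize x"
  unfolding wt_def by (simp add: nth_append)

lemma inj_snoc: "inj_on (\<lambda>T. T @ [la]) A" by (auto intro: inj_onI)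

lemma OT_disj: "nu \<noteq> nu' \<Longrightarrow> OT nu l \<inter> OT nu' l = {}"
  using OT_last by blast

lemma card_OT_Suc: "card (OT la (Suc l)) = (\<Sum>nu\<in>NB la. card (OT nu l))"
proof -
  have "card (OT la (Suc l)) = card (\<Union>nu \<in> NB la. OT nu l)"
    unfolding OT_Suc by (rule card_image[OF inj_snoc])
  also have "\<dots> = (\<Sum>nu\<in>NB la. card (OT nu l))"
    by (rule card_UN_disjoint) (auto simp: NB_finite OT_finite dest: OT_last)
  finally show ?thesis .
qed

lemma wt_OT_Suc:
  "(\<Sum>T\<in>OT la (Suc l). real (wt T))
    = (\<Sum>nu\<in>NB la. (\<Sum>T\<in>OT nu l. real (wt T)) + real (psize la) * real (card (OT nu l)))"
proof -
  have "(\<Sum>T\<in>OT la (Suc l). real (wt T)) = (\<Sum>T\<in>(\<Union>nu \<in> NB la. OT nu l). real (wt (T @ [la])))"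
    unfolding OT_Suc by (simp add: sum.reindex[OF inj_snoc])
  also have "\<dots> = (\<Sum>nu\<in>NB la. (\<Sum>T\<in>OT nu l. real (wt (T @ [la]))))"
    by (rule sum.UNION_disjoint) (auto simp: NB_finite OT_finite dest: OT_last)
  also have "\<dots> = (\<Sum>nu\<in>NB la. (\<Sum>T\<in>OT nu l. real (wt T)) + real (psize la) * real (card (OT nu l)))"
    by (simp add: wt_snoc sum.distrib mult.commute)
  finally show ?thesis .
qed



definition fT :: "nat list \<Rightarrow> real" where "fT mu = real (card (OT mu (psize mu)))"

lemma yideal_Un: "yideal A \<Longrightarrow> yideal B \<Longrightarrow> yideal (A \<union> B)"
  unfolding yideal_def by blast

lemma yideal_Int: "yideal A \<Longrightarrow> yideal B \<Longrightarrow> yideal (A \<inter> B)"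
  unfolding yideal_def by blast

lemma NB_split:
  assumes "is_partition mu"
  shows "(\<Sum>nu\<in>NB mu. g nu) = (\<Sum>nu\<in>DnS mu. g nu) + (\<Sum>nu\<in>UpS mu. g nu)"
  unfolding NB_def using UpDn_card[OF assms] NB_disj[of mu]
  by (subst sum.union_disjoint) (auto simp: add.commute)

lemma Dn_psize: "nu \<in> DnS mu \<Longrightarrow> psize mu = Suc (psize nu)"
  unfolding DnS_def using covers_psize by auto

lemma Up_psize: "nu \<in> UpS mu \<Longrightarrow> psize nu = Suc (psize mu)"
  unfolding UpS_def using covers_psize by auto

lemma Dn_part: "nu \<in> DnS mu \<Longrightarrow> is_partition nu"
  unfolding DnS_def using covers_part by auto

lemma Up_part: "nu \<in> UpS mu \<Longrightarrow> is_partition nu"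
  unfolding UpS_def using covers_part by auto

lemma f_down:
  assumes p: "is_partition mu" and m: "psize mu = Suc m"
  shows "fT mu = (\<Sum>nu\<in>DnS mu. fT nu)"
proof -
  have "fT mu = real (\<Sum>nu\<in>NB mu. card (OT nu m))"
    unfolding fT_def m card_OT_Suc ..
  also have "\<dots> = (\<Sum>nu\<in>NB mu. real (card (OT nu m)))" by simp
  also have "\<dots> = (\<Sum>nu\<in>DnS mu. real (card (OT nu m))) + (\<Sum>nu\<in>UpS mu. real (card (OT nu m)))"
    by (rule NB_split[OF p])
  also have "(\<Sum>nu\<in>UpS mu. real (card (OT nu m))) = 0"
    by (rule sum.neutral) (use Up_psize m OT_empty in force)
  also have "(\<Sum>nu\<in>DnS mu. real (card (OT nu m))) = (\<Sum>nu\<in>DnS mu. fT nu)"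
    by (rule sum.cong) (use Dn_psize m in \<open>auto simp: fT_def\<close>)
  finally show ?thesis by simp
qed

lemma swap_sum:
  assumes p: "is_partition mu"
  shows "(\<Sum>nu\<in>UpS mu. \<Sum>rho\<in>DnS nu - {mu}. g rho) = (\<Sum>sg\<in>DnS mu. \<Sum>rho\<in>UpS sg - {mu}. g rho)"
proof -
  have fU: "finite (UpS x)" if "is_partition x" for x using UpDn_card that by blast
  have fD: "finite (DnS x)" if "is_partition x" for x using UpDn_card that by blast
  have "(\<Sum>nu\<in>UpS mu. \<Sum>rho\<in>DnS nu - {mu}. g rho) = (\<Sum>(nu,rho)\<in>Sigma (UpS mu) (\<lambda>nu. DnS nu - {mu}). g rho)"
    by (rule sum.Sigma) (use fU fD p Up_part in auto)
  also have "\<dots> = (\<Sum>(sg,rho)\<in>Sigma (DnS mu) (\<lambda>sg. UpS sg - {mu}). g rho)"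
    (is "sum ?h ?T = sum ?g ?S")
  proof -
    define i0 where "i0 = (\<lambda>(nu::nat list,rho::nat list). (part_of (diagram mu \<inter> diagram rho), rho))"
    define j0 where "j0 = (\<lambda>(sg::nat list,rho::nat list). (part_of (diagram mu \<union> diagram rho), rho))"
    have hA: "i0 (j0 a) = a \<and> j0 a \<in> ?T \<and> snd (j0 a) = snd a" if "a \<in> ?S" for a
    proof -
    note aS = that
    then obtain sg rho where a: "a = (sg, rho)" "covers sg mu" "covers sg rho" "rho \<noteq> mu"
      unfolding DnS_def UpS_def by auto
    obtain x where x: "x \<notin> diagram sg" "diagram mu = insert x (diagram sg)" using a(2) unfolding covers_def by auto
    obtain y where y: "y \<notin> diagram sg" "diagram rho = insert y (diagram sg)" using a(3) unfolding covers_def by auto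
    have ps: "is_partition sg" "is_partition mu" "is_partition rho" using a covers_part by auto
    have xy: "x \<noteq> y"
    proof
      assume "x = y"
      then have "diagram rho = diagram mu" by (simp only: x(2) y(2))
      then show False using a(4) diagram_inj[OF ps(3) ps(2)] by simp
    qed
    have I: "diagram mu \<inter> diagram rho = diagram sg" unfolding x(2) y(2) using x(1) y(1) xy by blast
    have U: "diagram mu \<union> diagram rho = insert y (diagram mu)" unfolding x(2) y(2) by blast
    have U2: "diagram mu \<union> diagram rho = insert x (diagram rho)" unfolding x(2) y(2) by blast
    have ym: "y \<notin> diagram mu" unfolding x(2) using y(1) xy by simp
    have xr: "x \<notin> diagram rho" unfolding y(2) using x(1) xy by simp
    have yU: "yideal (diagram mu \<union> diagram rho)" using yideal_Un yideal_diagram ps by blast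
    note pp = part_of_props[OF yU]
    have 1: "i0 (j0 a) = a"
      using a(1) I part_of_diagram[OF ps(1)] unfolding i0_def j0_def by simp
    have "covers mu (part_of (diagram mu \<union> diagram rho))"
      unfolding covers_def using ps(2) pp(1) pp(2) U ym by blast
    moreover have "covers rho (part_of (diagram mu \<union> diagram rho))"
      unfolding covers_def using ps(3) pp(1) pp(2) U2 xr by blast
    ultimately have "j0 a \<in> ?T"
      using a(1,4) unfolding UpS_def DnS_def j0_def by auto
    then show "i0 (j0 a) = a \<and> j0 a \<in> ?T \<and> snd (j0 a) = snd a" using 1 a(1) unfolding j0_def by simp
    qed
    have hB: "j0 (i0 b) = b \<and> i0 b \<in> ?S" if "b \<in> ?T" for b
    proof -
    note bT = that
    then obtain nu rho where b: "b = (nu, rho)" "covers mu nu" "covers rho nu" "rho \<noteq> mu"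
      unfolding DnS_def UpS_def by auto
    obtain x where x: "x \<notin> diagram mu" "diagram nu = insert x (diagram mu)" using b(2) unfolding covers_def by auto
    obtain y where y: "y \<notin> diagram rho" "diagram nu = insert y (diagram rho)" using b(3) unfolding covers_def by auto
    have ps: "is_partition nu" "is_partition mu" "is_partition rho" using b covers_part by auto
    have xy: "x \<noteq> y"
    proof
      assume "x = y"
      have "diagram mu = diagram nu - {x}" using x by simp
      also have "\<dots> = diagram rho" using y \<open>x = y\<close> by simp
      finally show False using b(4) diagram_inj[OF ps(3) ps(2)] by simp
    qed
    let ?I = "diagram mu \<inter> diagram rho"
    have dm: "diagram mu = diagram nu - {x}" using x by simp
    have dr: "diagram rho = diagram nu - {y}" using y by simp
    have U: "diagram mu \<union> diagram rho = diagram nu" unfolding dm dr using xy by blast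
    have m1: "diagram mu = insert y ?I" "y \<notin> ?I" unfolding dm dr using xy y(2) by blast+
    have r1: "diagram rho = insert x ?I" "x \<notin> ?I" unfolding dm dr using xy x(2) by blast+
    have yI: "yideal ?I" using yideal_Int yideal_diagram ps by blast
    note pp = part_of_props[OF yI]
    have 1: "j0 (i0 b) = b"
      using b(1) U part_of_diagram[OF ps(1)] unfolding i0_def j0_def by simp
    have "covers (part_of ?I) mu"
      unfolding covers_def using ps(2) pp(1) pp(2) m1 by blast
    moreover have "covers (part_of ?I) rho"
      unfolding covers_def using ps(3) pp(1) pp(2) r1 by blast
    ultimately have "i0 b \<in> ?S"
      using b(1,4) unfolding UpS_def DnS_def i0_def by auto
    then show "j0 (i0 b) = b \<and> i0 b \<in> ?S" using 1 by simp
    qed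
    show ?thesis
    proof (rule sum.reindex_bij_witness[of ?T j0 i0 ?S])
      fix a assume "a \<in> ?S"
      then show "i0 (j0 a) = a" "j0 a \<in> ?T" using hA[of a] by auto
    next
      fix b assume "b \<in> ?T"
      then show "j0 (i0 b) = b" "i0 b \<in> ?S" using hB[of b] by auto
      show "?g (i0 b) = ?h b" unfolding i0_def by (auto split: prod.splits)
    qed
  qed
  also have "\<dots> = (\<Sum>sg\<in>DnS mu. \<Sum>rho\<in>UpS sg - {mu}. g rho)"
    by (rule sum.Sigma[symmetric]) (use fU fD p Dn_part in auto)
  finally show ?thesis .
qed

lemma f_up:
  "is_partition mu \<Longrightarrow> psize mu = m \<Longrightarrow> (\<Sum>nu\<in>UpS mu. fT nu) = real (Suc m) * fT mu"
proof (induction m arbitrary: mu rule: less_induct)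
  case (less m)
  note p = less.prems(1)
  have fU: "finite (UpS mu)" "finite (DnS mu)" using UpDn_card[OF p] by auto
  have "(\<Sum>nu\<in>UpS mu. fT nu) = (\<Sum>nu\<in>UpS mu. \<Sum>rho\<in>DnS nu. fT rho)"
    by (rule sum.cong) (use f_down Up_psize Up_part in blast)+
  also have "\<dots> = (\<Sum>nu\<in>UpS mu. fT mu + (\<Sum>rho\<in>DnS nu - {mu}. fT rho))"
  proof (rule sum.cong[OF refl])
    fix nu assume nu: "nu \<in> UpS mu"
    then have "mu \<in> DnS nu" "finite (DnS nu)" using UpDn_card[OF Up_part[OF nu]]
      unfolding UpS_def DnS_def by auto
    then show "(\<Sum>rho\<in>DnS nu. fT rho) = fT mu + (\<Sum>rho\<in>DnS nu - {mu}. fT rho)"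
      by (rule sum.remove[rotated])
  qed
  also have "\<dots> = real (card (UpS mu)) * fT mu + (\<Sum>nu\<in>UpS mu. \<Sum>rho\<in>DnS nu - {mu}. fT rho)"
    by (simp add: sum.distrib)
  also have "(\<Sum>nu\<in>UpS mu. \<Sum>rho\<in>DnS nu - {mu}. fT rho) = (\<Sum>sg\<in>DnS mu. \<Sum>rho\<in>UpS sg - {mu}. fT rho)"
    by (rule swap_sum[OF p])
  also have "\<dots> = (\<Sum>sg\<in>DnS mu. real m * fT sg - fT mu)"
  proof (rule sum.cong[OF refl])
    fix sg assume sg: "sg \<in> DnS mu"
    have ps: "is_partition sg" using Dn_part[OF sg] .
    have sz: "m = Suc (psize sg)" using Dn_psize[OF sg] less.prems(2) by simp
    have "mu \<in> UpS sg" "finite (UpS sg)" using sg UpDn_card[OF ps] unfolding UpS_def DnS_def by auto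
    then have "(\<Sum>rho\<in>UpS sg. fT rho) = fT mu + (\<Sum>rho\<in>UpS sg - {mu}. fT rho)"
      by (intro sum.remove) auto
    moreover have "(\<Sum>rho\<in>UpS sg. fT rho) = real m * fT sg"
      using less.IH[of "psize sg" sg] ps sz by simp
    ultimately show "(\<Sum>rho\<in>UpS sg - {mu}. fT rho) = real m * fT sg - fT mu" by simp
  qed
  also have "\<dots> = real m * (\<Sum>sg\<in>DnS mu. fT sg) - real (card (DnS mu)) * fT mu"
    by (simp add: sum_subtractf sum_distrib_left)
  also have "real m * (\<Sum>sg\<in>DnS mu. fT sg) = real m * fT mu"
  proof (cases m)
    case (Suc m')
    then show ?thesis using f_down[OF p, of m'] less.prems(2) by simp
  qed simp
  finally show ?case using UpDn_card(3)[OF p] by (simp add: algebra_simps)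
qed

lemma f_pos: "is_partition mu \<Longrightarrow> psize mu = m \<Longrightarrow> fT mu > 0"
proof (induction m arbitrary: mu)
  case 0
  then have "mu = []" unfolding psize_def is_partition_def
    by (cases mu) auto
  then show ?case unfolding fT_def by (simp add: OT_0 psize_def)
next
  case (Suc m)
  note p = Suc.prems(1)
  have "mu \<noteq> []" using Suc.prems(2) by (auto simp: psize_def)
  then have "length mu - 1 \<in> Rset mu" unfolding Rset_def by auto
  then have "removable (diagram mu) \<noteq> {}" using removable_eq[OF p] by auto
  then have ne: "DnS mu \<noteq> {}" using dn_image(1)[OF p] by auto
  have fin: "finite (DnS mu)" using UpDn_card[OF p] by auto
  have "\<forall>nu\<in>DnS mu. fT nu > 0" using Suc.IH Dn_part Dn_psize Suc.prems(2) by force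
  then have "(\<Sum>nu\<in>DnS mu. fT nu) > 0" using ne fin by (intro sum_pos) auto
  then show ?case using f_down[OF p Suc.prems(2)] by simp
qed



definition Ac :: "nat \<Rightarrow> nat \<Rightarrow> real" where
  "Ac m n = real (fact (m + 2*n)) / (real (fact m) * 2^n * real (fact n))"

lemma Ac_pos: "Ac m n > 0"
  unfolding Ac_def by (simp add: divide_pos_pos)

lemma Ac_00: "Ac 0 0 = 1" unfolding Ac_def by simp

lemma Ac_Suc_m: "Ac (Suc m) n * real (Suc m) = Ac m n * real (Suc (m + 2*n))"
proof -
  have e: "Suc m + 2*n = Suc (m + 2*n)" by simp
  have "Ac (Suc m) n = (real (Suc (m + 2*n)) * fact (m + 2*n)) / (real (Suc m) * (fact m * 2^n * fact n))"
    unfolding Ac_def e of_nat_fact fact_Suc[where 'a=real, of "m + 2*n"] fact_Suc[where 'a=real, of m] by (simp only: mult.assoc)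
  also have "\<dots> = (real (Suc (m + 2*n)) / real (Suc m)) * Ac m n"
    unfolding Ac_def of_nat_fact by (rule times_divide_times_eq[symmetric])
  finally show ?thesis by simp
qed

lemma Ac_Suc_n: "Ac m (Suc n) * real (2 * Suc n) = Ac (Suc m) n * real (Suc m) * real (Suc (Suc (m + 2*n)))"
proof -
  have e2: "m + 2 * Suc n = Suc (Suc (m + 2*n))" by simp
  have "Ac m (Suc n) = (real (Suc (Suc (m + 2*n))) * (real (Suc (m + 2*n)) * fact (m + 2*n))) / ((2 * real (Suc n)) * (fact m * 2^n * fact n))"
    unfolding Ac_def e2 of_nat_fact fact_Suc[where 'a=real, of "Suc (m + 2*n)"] fact_Suc[where 'a=real, of "m + 2*n"] fact_Suc[where 'a=real, of n]
    by (simp only: power_Suc mult.assoc mult.left_commute mult.commute)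
  also have "\<dots> = (real (Suc (Suc (m + 2*n))) * real (Suc (m + 2*n)) / (2 * real (Suc n))) * Ac m n"
    unfolding Ac_def of_nat_fact by (simp only: times_divide_times_eq mult.assoc)
  finally have 1: "Ac m (Suc n) * real (2 * Suc n) = real (Suc (Suc (m + 2*n))) * real (Suc (m + 2*n)) * Ac m n"
    by simp
  show ?thesis unfolding 1 Ac_Suc_m by (simp only: ac_simps)
qed

lemma cancel_h: "(c::real) \<noteq> 0 \<Longrightarrow> (p / c) * (c * X) * F = p * X * F"
  by (simp add: field_simps)

lemma cancel_h2: "(c::real) \<noteq> 0 \<Longrightarrow> u + v = c \<Longrightarrow> p * u / c * F + p * v / c * F = p * F"
proof -
  assume c: "c \<noteq> 0" and uv: "u + v = c"
  have "p * u / c * F + p * v / c * F = p * (u + v) / c * F" using c by (simp add: field_simps)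
  then show ?thesis using c uv by simp
qed

lemma psize0: "is_partition mu \<Longrightarrow> psize mu = 0 \<Longrightarrow> mu = []"
  unfolding psize_def is_partition_def by (cases mu) auto

lemma main:
  "l = psize mu + 2*n \<Longrightarrow> is_partition mu \<Longrightarrow>
    real (card (OT mu l)) = Ac (psize mu) n * fT mu \<and>
    (\<Sum>T\<in>OT mu l. real (wt T)) = Ac (psize mu) n * (real (psize mu + 2*n + 1) * (real n / 3 + real (psize mu) / 2)) * fT mu"
proof (induction l arbitrary: mu n)
  case 0
  then have "mu = []" "n = 0" using psize0 by auto
  then show ?case unfolding fT_def by (simp add: OT_0 Ac_00 wt_def psize_def)
next
  case (Suc l)
  note p = Suc.prems(2)
  define m where "m = psize mu"
  define a where "a = Ac m n"
  define F where "F = fT mu"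
  have lm: "Suc l = m + 2*n" using Suc.prems(1) m_def by simp
  have pos: "real (m + 2*n) > 0" using lm by simp
  have SDc: "(\<Sum>nu\<in>DnS mu. real (card (OT nu l))) = a * real m / real (m + 2*n) * F"
   and SDw: "(\<Sum>nu\<in>DnS mu. \<Sum>T\<in>OT nu l. real (wt T)) = a * real m * (real n / 3 + (real m - 1) / 2) * F"
  proof -
    have "(\<Sum>nu\<in>DnS mu. real (card (OT nu l))) = a * real m / real (m + 2*n) * F
       \<and> (\<Sum>nu\<in>DnS mu. \<Sum>T\<in>OT nu l. real (wt T)) = a * real m * (real n / 3 + (real m - 1) / 2) * F"
    proof (cases m)
      case 0
      then have "DnS mu = {}" using Dn_psize m_def by fastforce
      then show ?thesis using 0 by simp
    next
      case (Suc m')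
      have ih: "real (card (OT nu l)) = Ac m' n * fT nu \<and>
          (\<Sum>T\<in>OT nu l. real (wt T)) = Ac m' n * (real (m' + 2*n + 1) * (real n / 3 + real m' / 2)) * fT nu"
        if "nu \<in> DnS mu" for nu
      proof -
        have "psize nu = m'" using Dn_psize[OF that] Suc m_def by simp
        then show ?thesis using Suc.IH[of nu n] Dn_part[OF that] lm Suc by simp
      qed
      have fd: "(\<Sum>nu\<in>DnS mu. fT nu) = F" using f_down[OF p, of m'] Suc m_def F_def by simp
      have am: "Ac m' n = a * real m / real (m + 2*n)"
      proof (subst nonzero_eq_divide_eq)
        show "real (m + 2*n) \<noteq> 0" using pos by linarith
        show "Ac m' n * real (m + 2*n) = a * real m"
          using Ac_Suc_m[of m' n] Suc a_def by (simp only: ac_simps add_Suc)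
      qed
      have "(\<Sum>nu\<in>DnS mu. real (card (OT nu l))) = (\<Sum>nu\<in>DnS mu. Ac m' n * fT nu)"
        using ih by (intro sum.cong) auto
      also have "\<dots> = Ac m' n * F" by (simp only: sum_distrib_left[symmetric] fd)
      also have "\<dots> = a * real m / real (m + 2*n) * F" by (simp only: am)
      finally have c1: "(\<Sum>nu\<in>DnS mu. real (card (OT nu l))) = a * real m / real (m + 2*n) * F" .
      have "(\<Sum>nu\<in>DnS mu. \<Sum>T\<in>OT nu l. real (wt T))
          = (\<Sum>nu\<in>DnS mu. Ac m' n * (real (m' + 2*n + 1) * (real n / 3 + real m' / 2)) * fT nu)"
        using ih by (intro sum.cong) auto
      also have "\<dots> = Ac m' n * (real (m' + 2*n + 1) * (real n / 3 + real m' / 2)) * F"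
        by (simp only: sum_distrib_left[symmetric] fd)
      also have "\<dots> = (a * real m / real (m + 2*n)) * (real (m + 2*n) * (real n / 3 + (real m - 1) / 2)) * F"
        using am Suc by simp
      also have "\<dots> = a * real m * (real n / 3 + (real m - 1) / 2) * F"
        by (rule cancel_h) (use pos in linarith)
      finally show ?thesis using c1 by simp
    qed
    then show "(\<Sum>nu\<in>DnS mu. real (card (OT nu l))) = a * real m / real (m + 2*n) * F"
      "(\<Sum>nu\<in>DnS mu. \<Sum>T\<in>OT nu l. real (wt T)) = a * real m * (real n / 3 + (real m - 1) / 2) * F" by auto
  qed
  have SUc: "(\<Sum>nu\<in>UpS mu. real (card (OT nu l))) = a * real (2*n) / real (m + 2*n) * F"
   and SUw: "(\<Sum>nu\<in>UpS mu. \<Sum>T\<in>OT nu l. real (wt T)) = a * real (2*n) * ((real n - 1) / 3 + (real m + 1) / 2) * F"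
  proof -
    have "(\<Sum>nu\<in>UpS mu. real (card (OT nu l))) = a * real (2*n) / real (m + 2*n) * F
       \<and> (\<Sum>nu\<in>UpS mu. \<Sum>T\<in>OT nu l. real (wt T)) = a * real (2*n) * ((real n - 1) / 3 + (real m + 1) / 2) * F"
    proof (cases n)
      case 0
      have "OT nu l = {}" if "nu \<in> UpS mu" for nu
        using OT_empty Up_psize[OF that] lm 0 m_def by simp
      then show ?thesis using 0 by simp
    next
      case (Suc n')
      have ih: "real (card (OT nu l)) = Ac (Suc m) n' * fT nu \<and>
          (\<Sum>T\<in>OT nu l. real (wt T)) = Ac (Suc m) n' * (real (Suc m + 2*n' + 1) * (real n' / 3 + real (Suc m) / 2)) * fT nu"
        if "nu \<in> UpS mu" for nu
      proof -
        have "psize nu = Suc m" using Up_psize[OF that] m_def by simp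
        then show ?thesis using Suc.IH[of nu n'] Up_part[OF that] lm Suc by simp
      qed
      have fu: "(\<Sum>nu\<in>UpS mu. fT nu) = real (Suc m) * F" using f_up[OF p] m_def F_def by simp
      have am: "real (Suc m) * Ac (Suc m) n' = a * real (2*n) / real (m + 2*n)"
      proof (subst nonzero_eq_divide_eq)
        show "real (m + 2*n) \<noteq> 0" using pos by linarith
        have "m + 2*n = Suc (Suc (m + 2*n'))" using Suc by simp
        then show "real (Suc m) * Ac (Suc m) n' * real (m + 2*n) = a * real (2*n)"
          using Ac_Suc_n[of m n'] Suc a_def by (simp only: ac_simps)
      qed
      have "(\<Sum>nu\<in>UpS mu. real (card (OT nu l))) = (\<Sum>nu\<in>UpS mu. Ac (Suc m) n' * fT nu)"
        using ih by (intro sum.cong) auto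
      also have "\<dots> = Ac (Suc m) n' * (real (Suc m) * F)" by (simp only: sum_distrib_left[symmetric] fu)
      also have "\<dots> = (real (Suc m) * Ac (Suc m) n') * F" by (simp only: ac_simps)
      also have "\<dots> = a * real (2*n) / real (m + 2*n) * F" by (simp only: am)
      finally have c1: "(\<Sum>nu\<in>UpS mu. real (card (OT nu l))) = a * real (2*n) / real (m + 2*n) * F" .
      have "(\<Sum>nu\<in>UpS mu. \<Sum>T\<in>OT nu l. real (wt T))
          = (\<Sum>nu\<in>UpS mu. Ac (Suc m) n' * (real (Suc m + 2*n' + 1) * (real n' / 3 + real (Suc m) / 2)) * fT nu)"
        using ih by (intro sum.cong) auto
      also have "\<dots> = Ac (Suc m) n' * (real (Suc m + 2*n' + 1) * (real n' / 3 + real (Suc m) / 2)) * (real (Suc m) * F)"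
        by (simp only: sum_distrib_left[symmetric] fu)
      also have "\<dots> = (real (Suc m) * Ac (Suc m) n') * (real (Suc m + 2*n' + 1) * (real n' / 3 + real (Suc m) / 2)) * F"
        by (simp only: ac_simps)
      also have "\<dots> = (a * real (2*n) / real (m + 2*n)) * (real (m + 2*n) * ((real n - 1) / 3 + (real m + 1) / 2)) * F"
        unfolding am using Suc by simp
      also have "\<dots> = a * real (2*n) * ((real n - 1) / 3 + (real m + 1) / 2) * F"
        by (rule cancel_h) (use pos in linarith)
      finally show ?thesis using c1 by simp
    qed
    then show "(\<Sum>nu\<in>UpS mu. real (card (OT nu l))) = a * real (2*n) / real (m + 2*n) * F"
      "(\<Sum>nu\<in>UpS mu. \<Sum>T\<in>OT nu l. real (wt T)) = a * real (2*n) * ((real n - 1) / 3 + (real m + 1) / 2) * F" by auto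
  qed
  have card: "real (card (OT mu (Suc l))) = a * F"
  proof -
    have "real (card (OT mu (Suc l))) = (\<Sum>nu\<in>NB mu. real (card (OT nu l)))"
      by (simp add: card_OT_Suc)
    also have "\<dots> = a * real m / real (m + 2*n) * F + a * real (2*n) / real (m + 2*n) * F"
      unfolding NB_split[OF p, of "\<lambda>nu. real (card (OT nu l))"] SDc SUc ..
    also have "\<dots> = a * F" by (rule cancel_h2) (use pos in simp_all)
    finally show ?thesis .
  qed
  have wt: "(\<Sum>T\<in>OT mu (Suc l). real (wt T)) = a * (real (m + 2*n + 1) * (real n / 3 + real m / 2)) * F"
  proof -
    have "(\<Sum>T\<in>OT mu (Suc l). real (wt T))
        = (\<Sum>nu\<in>NB mu. (\<Sum>T\<in>OT nu l. real (wt T))) + real m * (\<Sum>nu\<in>NB mu. real (card (OT nu l)))"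
      unfolding wt_OT_Suc m_def by (simp add: sum.distrib sum_distrib_left)
    also have "(\<Sum>nu\<in>NB mu. real (card (OT nu l))) = a * F"
      using card by (simp add: card_OT_Suc)
    also have "(\<Sum>nu\<in>NB mu. (\<Sum>T\<in>OT nu l. real (wt T)))
        = a * real m * (real n / 3 + (real m - 1) / 2) * F + a * real (2*n) * ((real n - 1) / 3 + (real m + 1) / 2) * F"
      unfolding NB_split[OF p, of "\<lambda>nu. \<Sum>T\<in>OT nu l. real (wt T)"] SDw SUw ..
    finally show ?thesis by (simp add: field_simps)
  qed
  show ?case using card wt a_def m_def F_def by simp
qed


theorem corollary3:
  fixes la :: "nat list" and k n :: nat
  assumes "is_partition la" and "psize la = k"
  shows "(\<Sum>T\<in>OT la (k + 2 * n). real (wt T))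
           / (real (card (OT la (k + 2 * n))) * real (2 * n + k + 1))
         = real n / 3 + real k / 2"
proof -
  have M: "real (card (OT la (k + 2*n))) = Ac k n * fT la \<and>
    (\<Sum>T\<in>OT la (k + 2*n). real (wt T)) = Ac k n * (real (k + 2*n + 1) * (real n / 3 + real k / 2)) * fT la"
    using main[of "k + 2*n" la n] assms by simp
  have a: "Ac k n > 0" by (rule Ac_pos)
  have f: "fT la > 0" using f_pos assms by blast
  have r: "real (2 * n + k + 1) = real (k + 2*n + 1)" by simp
  define R where "R = real (k + 2*n + 1)"
  have R: "R > 0" unfolding R_def by simp
  have "(\<Sum>T\<in>OT la (k + 2 * n). real (wt T)) / (real (card (OT la (k + 2 * n))) * real (2 * n + k + 1))
      = (Ac k n * (R * (real n / 3 + real k / 2)) * fT la) / ((Ac k n * fT la) * R)"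
    using M unfolding r R_def by simp
  also have "\<dots> = real n / 3 + real k / 2" using a f R by (simp add: field_simps)
  finally show ?thesis .
qed

end
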